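(* Let $d$ be a positive integer, $0<p<1$, and let $\mu$ be a Borel probability measure on $\mathbb{S}^{d-1}$. Then $$\int_{\mathbb{S}^{d-1}}\int_{\mathbb{S}^{d-1}}\int_{\mathbb{S}^{d-1}}\left|\langle x,y\rangle\langle x,z\rangle\langle y,z\rangle\right|^p\,d\mu(x)\,d\mu(y)\,d\mu(z)\ge\frac{1}{d^2},$$ with equality if and only if $\mu$ is, up to central symmetry, the uniform distribution over an orthonormal basis; that is, if and only if there is an orthonormal basis $e_1,\dots,e_d$ of $\mathbb{R}^d$ such that $\mu$ is supported on $\{\pm e_1,\dots,\pm e_d\}$ and $\mu(\{e_j,-e_j\})=\frac1d$ for each $j=1,\dots,d$.
   Context: $\mathbb{S}^{d-1}$ is the unit sphere of $\mathbb{R}^d$ and $\langle\cdot,\cdot\rangle$ the Euclidean inner product. *)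

theory Defs
  imports "HOL-Probability.Probability"
begin

definition triple_energy :: "real \<Rightarrow> 'a::euclidean_space measure \<Rightarrow> real" where
  "triple_energy p M =
     (\<integral>z. (\<integral>y. (\<integral>x. \<bar>(x \<bullet> y) * (x \<bullet> z) * (y \<bullet> z)\<bar> powr p \<partial>M) \<partial>M) \<partial>M)"

end

theory Submission
  imports Defs
begin

definition gg :: "'a::euclidean_space \<Rightarrow> 'a \<Rightarrow> 'a \<Rightarrow> real" where
  "gg x y z = (x \<bullet> y) * (x \<bullet> z) * (y \<bullet> z)"

definition Aop :: "'a::euclidean_space measure \<Rightarrow> 'a \<Rightarrow> 'a" where
  "Aop N z = (\<integral>x. (x \<bullet> z) *\<^sub>R x \<partial>N)"

lemma sq_sum_ge:
  fixes c :: "'b \<Rightarrow> real"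
  assumes "finite I"
  shows "(\<Sum>i\<in>I. c i)\<^sup>2 \<le> real (card I) * (\<Sum>i\<in>I. (c i)\<^sup>2)"
  using Cauchy_Schwarz_ineq_sum[of c "\<lambda>_. 1" I] by (simp add: mult.commute)

lemma quad_alg:
  fixes c :: "'b \<Rightarrow> 'b \<Rightarrow> real"
  assumes fin: "finite B" and ne: "B \<noteq> {}" and tr: "(\<Sum>i\<in>B. c i i) = 1"
  shows "(\<Sum>i\<in>B. \<Sum>j\<in>B. (c i j)\<^sup>2) \<ge> 1 / real (card B)"
    and "(\<Sum>i\<in>B. \<Sum>j\<in>B. (c i j)\<^sup>2) = 1 / real (card B) \<Longrightarrow>
         (\<forall>i\<in>B. \<forall>j\<in>B. c i j = (if i = j then 1 / real (card B) else 0))"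
proof -
  define d where "d = real (card B)"
  have dpos: "d > 0" using fin ne by (simp add: d_def card_gt_0_iff)
  have split: "(\<Sum>j\<in>B. (c i j)\<^sup>2) = (c i i)\<^sup>2 + (\<Sum>j\<in>B-{i}. (c i j)\<^sup>2)" if "i \<in> B" for i
    using fin that by (simp add: sum.remove)
  have S: "(\<Sum>i\<in>B. \<Sum>j\<in>B. (c i j)\<^sup>2) = (\<Sum>i\<in>B. (c i i)\<^sup>2) + (\<Sum>i\<in>B. \<Sum>j\<in>B-{i}. (c i j)\<^sup>2)"
    using split by (simp add: sum.distrib)
  have off: "(\<Sum>i\<in>B. \<Sum>j\<in>B-{i}. (c i j)\<^sup>2) \<ge> 0" by (intro sum_nonneg) auto
  have cs: "1 \<le> d * (\<Sum>i\<in>B. (c i i)\<^sup>2)" using sq_sum_ge[OF fin, of "\<lambda>i. c i i"] tr by (simp add: d_def)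
  then have diag: "(\<Sum>i\<in>B. (c i i)\<^sup>2) \<ge> 1 / d" using dpos by (simp add: field_simps)
  show "(\<Sum>i\<in>B. \<Sum>j\<in>B. (c i j)\<^sup>2) \<ge> 1 / real (card B)"
    using S off diag by (simp add: d_def)
  assume eq: "(\<Sum>i\<in>B. \<Sum>j\<in>B. (c i j)\<^sup>2) = 1 / real (card B)"
  have off0: "(\<Sum>i\<in>B. \<Sum>j\<in>B-{i}. (c i j)\<^sup>2) = 0" and diag0: "(\<Sum>i\<in>B. (c i i)\<^sup>2) = 1 / d"
    using S off diag eq by (simp_all add: d_def)
  have offz: "c i j = 0" if "i \<in> B" "j \<in> B" "i \<noteq> j" for i j
  proof -
    have "\<forall>i\<in>B. (\<Sum>j\<in>B-{i}. (c i j)\<^sup>2) = 0"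
      using off0 fin by (subst (asm) sum_nonneg_eq_0_iff) (auto intro: sum_nonneg)
    then have "(\<Sum>j\<in>B-{i}. (c i j)\<^sup>2) = 0" using that by auto
    then have "\<forall>j\<in>B-{i}. (c i j)\<^sup>2 = 0" using fin by (subst (asm) sum_nonneg_eq_0_iff) auto
    then show ?thesis using that by auto
  qed
  have "(\<Sum>i\<in>B. (c i i - 1/d)\<^sup>2) = (\<Sum>i\<in>B. (c i i)\<^sup>2 - 2/d * c i i + 1/d\<^sup>2)"
    by (rule sum.cong) (auto simp: power2_diff field_simps)
  also have "\<dots> = (\<Sum>i\<in>B. (c i i)\<^sup>2) - 2/d * (\<Sum>i\<in>B. c i i) + d * (1/d\<^sup>2)"
    by (simp add: sum.distrib sum_subtractf sum_distrib_left d_def)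
  also have "\<dots> = 0" using diag0 tr dpos by (simp add: field_simps power2_eq_square)
  finally have "\<forall>i\<in>B. (c i i - 1/d)\<^sup>2 = 0" using fin by (subst (asm) sum_nonneg_eq_0_iff) auto
  then have "c i i = 1/d" if "i \<in> B" for i using that by auto
  then show "\<forall>i\<in>B. \<forall>j\<in>B. c i j = (if i = j then 1 / real (card B) else 0)"
    using offz by (auto simp: d_def)
qed

lemma inner_unit: "norm (x::'a::real_inner) = 1 \<Longrightarrow> norm y = 1 \<Longrightarrow> \<bar>x \<bullet> y\<bar> \<le> 1"
  using Cauchy_Schwarz_ineq2[of x y] by simp

lemma gg_bound: "norm x = 1 \<Longrightarrow> norm y = 1 \<Longrightarrow> norm z = 1 \<Longrightarrow> \<bar>gg x y z\<bar> \<le> 1"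
  unfolding gg_def abs_mult
  by (intro mult_le_one inner_unit) (auto intro: inner_unit)

lemma split3: "(\<lambda>((z,y),x). F x y z) = (\<lambda>w. F (snd w) (snd (fst w)) (fst (fst w)))"
  by (auto simp: fun_eq_iff split: prod.split)

lemma gg_meas: "(\<lambda>((z,y),x). gg x y z) \<in> borel_measurable borel"
  unfolding split3 gg_def borel_prod[symmetric] by measurable

lemma ff_meas: "(\<lambda>((z,y),x). \<bar>gg x y z\<bar> powr p) \<in> borel_measurable borel"
  unfolding split3 gg_def borel_prod[symmetric] by measurable

lemma ff_bound: "0 < p \<Longrightarrow> norm x = 1 \<Longrightarrow> norm y = 1 \<Longrightarrow> norm z = 1 \<Longrightarrow> \<bar>\<bar>gg x y z\<bar> powr p\<bar> \<le> 1"
  using gg_bound[of x y z] by (simp add: powr_le1)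

lemma gg_le_ff: "0 < p \<Longrightarrow> p < 1 \<Longrightarrow> norm x = 1 \<Longrightarrow> norm y = 1 \<Longrightarrow> norm z = 1 \<Longrightarrow> gg x y z \<le> \<bar>gg x y z\<bar> powr p"
proof -
  assume p: "0 < p" "p < 1" and u: "norm x = 1" "norm y = 1" "norm z = 1"
  have b: "\<bar>gg x y z\<bar> \<le> 1" using gg_bound[OF u] .
  show ?thesis
  proof (cases "gg x y z = 0")
    case True then show ?thesis by simp
  next
    case False
    then have "\<bar>gg x y z\<bar> powr 1 \<le> \<bar>gg x y z\<bar> powr p"
      using b p by (intro powr_mono') auto
    then show ?thesis by simp
  qed
qed

lemma box3:
  fixes x0 y0 z0 :: "'a::euclidean_space"
  assumes "0 < gg x0 y0 z0" "gg x0 y0 z0 < 1"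
  shows "\<exists>r>0. \<forall>x y z. dist x x0 < r \<longrightarrow> dist y y0 < r \<longrightarrow> dist z z0 < r \<longrightarrow> 0 < gg x y z \<and> gg x y z < 1"
proof -
  define G where "G = (\<lambda>w::'a\<times>'a\<times>'a. gg (fst w) (fst (snd w)) (snd (snd w)))"
  have "isCont G (x0,y0,z0)" unfolding G_def gg_def by (intro continuous_intros)
  then have "(G \<longlongrightarrow> G (x0,y0,z0)) (at (x0,y0,z0))" by (simp add: isCont_def)
  moreover have "G (x0,y0,z0) \<in> {0<..<1}" using assms by (simp add: G_def)
  ultimately have "eventually (\<lambda>w. G w \<in> {0<..<1}) (at (x0,y0,z0))"
    by (intro topological_tendstoD) auto
  then have ev0: "eventually (\<lambda>w. w \<noteq> (x0,y0,z0) \<longrightarrow> G w \<in> {0<..<1}) (nhds (x0,y0,z0))"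
    by (simp add: eventually_at_filter)
  have Ga: "G (x0,y0,z0) \<in> {0<..<1}" using assms by (simp add: G_def)
  have ev: "eventually (\<lambda>w. G w \<in> {0<..<1}) (nhds (x0,y0,z0))"
    using ev0 by (rule eventually_mono) (metis Ga)
  then obtain d where d: "d > 0" "\<And>w. dist w (x0,y0,z0) < d \<Longrightarrow> G w \<in> {0<..<1}"
    unfolding eventually_nhds_metric by blast
  show ?thesis
  proof (intro exI[of _ "d/3"] conjI allI impI)
    show "d/3 > 0" using d by simp
    fix x y z assume h: "dist x x0 < d/3" "dist y y0 < d/3" "dist z z0 < d/3"
    have "dist (y,z) (y0,z0) \<le> dist y y0 + dist z z0"
      unfolding dist_Pair_Pair using sqrt_sum_squares_le_sum_abs[of "dist y y0" "dist z z0"] by simp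
    moreover have "dist (x,y,z) (x0,y0,z0) \<le> dist x x0 + dist (y,z) (y0,z0)"
      unfolding dist_Pair_Pair[of x "(y,z)"] using sqrt_sum_squares_le_sum_abs[of "dist x x0" "dist (y,z) (y0,z0)"] by simp
    ultimately have "dist (x,y,z) (x0,y0,z0) < d" using h by simp
    then have "G (x,y,z) \<in> {0<..<1}" by (rule d(2))
    then show "0 < gg x y z" "gg x y z < 1" by (auto simp: G_def)
  qed
qed

lemma unit_sq1:
  fixes u v :: "'a::euclidean_space"
  assumes "norm u = 1" "norm v = 1" "(u \<bullet> v)\<^sup>2 = 1"
  shows "v = u \<or> v = - u"
proof -
  have "u \<bullet> v = 1 \<or> u \<bullet> v = -1" using assms(3) by (simp add: power2_eq_1_iff)
  then have "\<bar>u \<bullet> v\<bar> = norm u * norm v" using assms by auto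
  then have "norm u *\<^sub>R v = norm v *\<^sub>R u \<or> norm u *\<^sub>R v = - norm v *\<^sub>R u"
    by (simp only: norm_cauchy_schwarz_abs_eq)
  then show ?thesis using assms by auto
qed

lemma onb_facts:
  fixes e :: "nat \<Rightarrow> 'a::euclidean_space"
  assumes ON: "\<forall>i<n. \<forall>j<n. e i \<bullet> e j = (if i = j then 1 else 0)"
  shows "\<And>x y i k. i < n \<Longrightarrow> k < n \<Longrightarrow> x \<in> {e i, - e i} \<Longrightarrow> y \<in> {e k, - e k} \<Longrightarrow>
            \<bar>x \<bullet> y\<bar> = (if i = k then 1 else 0)"
    and "\<And>x i j. i < n \<Longrightarrow> j < n \<Longrightarrow> x \<in> {e i, - e i} \<Longrightarrow>
            indicator {e j, - e j} x = (if j = i then 1 else (0::real))"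
proof -
  show ab: "\<bar>x \<bullet> y\<bar> = (if i = k then 1 else 0)" if "i < n" "k < n" "x \<in> {e i, - e i}" "y \<in> {e k, - e k}" for x y i k
    using that ON by auto
  show "indicator {e j, - e j} x = (if j = i then 1 else (0::real))" if "i < n" "j < n" "x \<in> {e i, - e i}" for x i j
  proof (cases "j = i")
    case True then show ?thesis using that by simp
  next
    case False
    have "x \<notin> {e j, - e j}"
    proof
      assume "x \<in> {e j, - e j}"
      then have "\<bar>x \<bullet> x\<bar> = 0" using ab[OF that(2,1) _ that(3)] False by auto
      moreover have "\<bar>x \<bullet> x\<bar> = 1" using ab[OF that(1,1) that(3,3)] by simp
      ultimately show False by simp
    qed
    then show ?thesis using False by simp
  qed
qed

lemma key_point:
  fixes e :: "nat \<Rightarrow> 'a::euclidean_space"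
  assumes ON: "\<forall>i<n. \<forall>j<n. e i \<bullet> e j = (if i = j then 1 else 0)" and p: "0 < p"
    and x: "x \<in> (\<Union>j<n. {e j, - e j})" and y: "y \<in> (\<Union>j<n. {e j, - e j})" and z: "z \<in> (\<Union>j<n. {e j, - e j})"
  shows "\<bar>gg x y z\<bar> powr p = (\<Sum>j<n. indicator {e j, - e j} x * indicator {e j, - e j} y * indicator {e j, - e j} z)"
proof -
  obtain i k l where ikl: "i < n" "k < n" "l < n" "x \<in> {e i, - e i}" "y \<in> {e k, - e k}" "z \<in> {e l, - e l}"
    using x y z by blast
  note f = onb_facts[OF ON]
  have "\<bar>gg x y z\<bar> = (if i = k \<and> i = l then 1 else 0)"
    unfolding gg_def abs_mult
    using f(1)[OF ikl(1,2,4,5)] f(1)[OF ikl(1,3,4,6)] f(1)[OF ikl(2,3,5,6)] by auto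
  then have L: "\<bar>gg x y z\<bar> powr p = (if i = k \<and> i = l then 1 else 0)" using p by simp
  have "(\<Sum>j<n. indicator {e j, - e j} x * indicator {e j, - e j} y * indicator {e j, - e j} z) =
        (\<Sum>j<n. (if j = i then (if i = k \<and> i = l then 1 else 0) else (0::real)))"
    using f(2)[OF ikl(1) _ ikl(4)] f(2)[OF ikl(2) _ ikl(5)] f(2)[OF ikl(3) _ ikl(6)]
    by (intro sum.cong refl) auto
  also have "\<dots> = (if i = k \<and> i = l then 1 else 0)" using ikl(1) by (simp add: sum.delta)
  finally show ?thesis using L by simp
qed

context
  fixes M :: "'a::euclidean_space measure"
  assumes P: "prob_space M" and B: "sets M = sets borel" and Sph: "AE x in M. norm x = 1"
begin

lemma spc: "space M = UNIV"
  using sets_eq_imp_space_eq[OF B] by simp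

lemma measM: "(h \<in> borel_measurable M) = (h \<in> borel_measurable borel)"
  by (simp add: measurable_cong_sets[OF B refl])

lemma intb:
  fixes h :: "'a \<Rightarrow> 'b::{banach,second_countable_topology}"
  assumes "h \<in> borel_measurable borel" "\<And>x. norm x = 1 \<Longrightarrow> norm (h x) \<le> C"
  shows "integrable M h"
proof -
  interpret prob_space M by (rule P)
  show ?thesis
    apply (rule integrable_const_bound[where B=C])
    using Sph apply eventually_elim using assms(2) apply simp
    using assms(1) by (simp add: measurable_cong_sets[OF B refl])
qed

lemma intbound:
  fixes h :: "'a \<Rightarrow> real"
  assumes "h \<in> borel_measurable borel" "\<And>x. norm x = 1 \<Longrightarrow> \<bar>h x\<bar> \<le> C"
  shows "\<bar>\<integral>x. h x \<partial>M\<bar> \<le> C"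
proof -
  interpret prob_space M by (rule P)
  have i: "integrable M h" using intb[of h C] assms by simp
  have "\<bar>\<integral>x. h x \<partial>M\<bar> \<le> (\<integral>x. \<bar>h x\<bar> \<partial>M)" by (rule integral_abs_bound)
  also have "\<dots> \<le> (\<integral>x. C \<partial>M)"
    apply (rule integral_mono_AE)
    using i apply simp apply simp
    using Sph apply eventually_elim using assms(2) by simp
  also have "\<dots> = C" by (simp add: prob_space)
  finally show ?thesis .
qed

lemma pint:
  fixes h :: "'b::second_countable_topology \<Rightarrow> 'a \<Rightarrow> 'c::{banach,second_countable_topology}"
  assumes "case_prod h \<in> borel_measurable borel"
  shows "(\<lambda>y. \<integral>x. h y x \<partial>M) \<in> borel_measurable borel"
proof -
  interpret prob_space M by (rule P)
  have "sets ((borel::'b measure) \<Otimes>\<^sub>M M) = sets ((borel::'b measure) \<Otimes>\<^sub>M (borel::'a measure))"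
    by (rule sets_pair_measure_cong) (auto simp: B)
  also have "\<dots> = sets borel" by (simp only: borel_prod)
  finally have "case_prod h \<in> borel_measurable (borel \<Otimes>\<^sub>M M)"
    using assms measurable_cong_sets by blast
  then show ?thesis by (rule borel_measurable_lebesgue_integral)
qed

lemma tri_meas:
  fixes F :: "'a \<Rightarrow> 'a \<Rightarrow> 'a \<Rightarrow> real"
  assumes m: "(\<lambda>((z,y),x). F x y z) \<in> borel_measurable borel"
  shows "(\<lambda>x. F x y z) \<in> borel_measurable borel"
    and "(\<lambda>y. \<integral>x. F x y z \<partial>M) \<in> borel_measurable borel"
    and "(\<lambda>z. \<integral>y. \<integral>x. F x y z \<partial>M \<partial>M) \<in> borel_measurable borel"
proof -
  have c1: "(\<lambda>x::'a. ((z,y),x)) \<in> borel_measurable borel" for y z :: 'a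
    by (intro borel_measurable_continuous_onI continuous_intros)
  have c2: "(\<lambda>w::'a\<times>'a. ((z,fst w),snd w)) \<in> borel_measurable borel" for z :: 'a
    by (intro borel_measurable_continuous_onI continuous_intros)
  have "(\<lambda>((z,y),x). F x y z) \<circ> (\<lambda>x. ((z,y),x)) \<in> borel_measurable borel" for y z
    using measurable_comp[OF c1 m] by simp
  then show "(\<lambda>x. F x y z) \<in> borel_measurable borel" by (simp add: o_def)
  have "(\<lambda>((z,y),x). F x y z) \<circ> (\<lambda>w::'a\<times>'a. ((z,fst w),snd w)) \<in> borel_measurable borel" for z
    using measurable_comp[OF c2 m] by simp
  then have m2: "(\<lambda>(y,x). F x y z) \<in> borel_measurable borel" for z
    by (simp add: o_def case_prod_beta')
  show "(\<lambda>y. \<integral>x. F x y z \<partial>M) \<in> borel_measurable borel"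
    using pint[of "\<lambda>y x. F x y z"] m2 by simp
  have m3: "(\<lambda>(z,y). \<integral>x. F x y z \<partial>M) \<in> borel_measurable borel"
    using pint[of "\<lambda>w x. F x (snd w) (fst w)"] m by (simp add: case_prod_beta')
  show "(\<lambda>z. \<integral>y. \<integral>x. F x y z \<partial>M \<partial>M) \<in> borel_measurable borel"
    using pint[of "\<lambda>z y. \<integral>x. F x y z \<partial>M"] m3 by simp
qed

lemma tri_int:
  fixes F :: "'a \<Rightarrow> 'a \<Rightarrow> 'a \<Rightarrow> real"
  assumes m: "(\<lambda>((z,y),x). F x y z) \<in> borel_measurable borel"
    and b: "\<forall>x y z. norm x = 1 \<longrightarrow> norm y = 1 \<longrightarrow> norm z = 1 \<longrightarrow> \<bar>F x y z\<bar> \<le> 1"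
  shows "norm y = 1 \<Longrightarrow> norm z = 1 \<Longrightarrow> integrable M (\<lambda>x. F x y z)"
    and "norm y = 1 \<Longrightarrow> norm z = 1 \<Longrightarrow> \<bar>\<integral>x. F x y z \<partial>M\<bar> \<le> 1"
    and "norm z = 1 \<Longrightarrow> integrable M (\<lambda>y. \<integral>x. F x y z \<partial>M)"
    and "norm z = 1 \<Longrightarrow> \<bar>\<integral>y. \<integral>x. F x y z \<partial>M \<partial>M\<bar> \<le> 1"
    and "integrable M (\<lambda>z. \<integral>y. \<integral>x. F x y z \<partial>M \<partial>M)"
    and "\<bar>\<integral>z. \<integral>y. \<integral>x. F x y z \<partial>M \<partial>M \<partial>M\<bar> \<le> 1"
proof -
  note mm = tri_meas[OF m]
  show "norm y = 1 \<Longrightarrow> norm z = 1 \<Longrightarrow> integrable M (\<lambda>x. F x y z)"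
    by (rule intb[OF mm(1), where C=1]) (use b in auto)
  show b1: "norm y = 1 \<Longrightarrow> norm z = 1 \<Longrightarrow> \<bar>\<integral>x. F x y z \<partial>M\<bar> \<le> 1" for y z
    by (rule intbound[OF mm(1)]) (use b in auto)
  show "norm z = 1 \<Longrightarrow> integrable M (\<lambda>y. \<integral>x. F x y z \<partial>M)"
    by (rule intb[OF mm(2), where C=1]) (use b1 in auto)
  show b2: "norm z = 1 \<Longrightarrow> \<bar>\<integral>y. \<integral>x. F x y z \<partial>M \<partial>M\<bar> \<le> 1" for z
    by (rule intbound[OF mm(2)]) (use b1 in auto)
  show "integrable M (\<lambda>z. \<integral>y. \<integral>x. F x y z \<partial>M \<partial>M)"
    by (rule intb[OF mm(3), where C=1]) (use b2 in auto)
  show "\<bar>\<integral>z. \<integral>y. \<integral>x. F x y z \<partial>M \<partial>M \<partial>M\<bar> \<le> 1"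
    by (rule intbound[OF mm(3)]) (use b2 in auto)
qed

lemma jensen_sq:
  fixes h :: "'a \<Rightarrow> real"
  assumes "integrable M h" "integrable M (\<lambda>x. (h x)\<^sup>2)"
  shows "(\<integral>x. h x \<partial>M)\<^sup>2 \<le> (\<integral>x. (h x)\<^sup>2 \<partial>M)"
proof -
  interpret prob_space M by (rule P)
  define c where "c = (\<integral>x. h x \<partial>M)"
  have "0 \<le> (\<integral>x. (h x - c)\<^sup>2 \<partial>M)" by (intro integral_nonneg_AE) simp
  also have "(\<integral>x. (h x - c)\<^sup>2 \<partial>M) = (\<integral>x. (h x)\<^sup>2 - 2 * c * h x + c\<^sup>2 \<partial>M)"
    by (rule Bochner_Integration.integral_cong[OF refl]) (simp add: power2_diff algebra_simps)
  also have "\<dots> = (\<integral>x. (h x)\<^sup>2 \<partial>M) - 2 * c * c + c\<^sup>2"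
    using assms by (simp add: c_def prob_space)
  finally show ?thesis by (simp add: c_def power2_eq_square)
qed

lemma A_int: "integrable M (\<lambda>x. (x \<bullet> z) *\<^sub>R x)"
  by (rule intb[where C="norm z"]) (auto intro: order_trans[OF Cauchy_Schwarz_ineq2])

lemma A_meas: "Aop M \<in> borel_measurable borel"
proof -
  have "(\<lambda>(z,x). (x \<bullet> z) *\<^sub>R x) \<in> borel_measurable (borel :: ('a \<times> 'a) measure)"
    unfolding borel_prod[symmetric] by measurable
  then show ?thesis using pint[of "\<lambda>z x. (x \<bullet> z) *\<^sub>R x"] unfolding Aop_def by simp
qed

lemma A_norm: "norm (Aop M z) \<le> norm z"
proof -
  have "norm (Aop M z) \<le> (\<integral>x. norm ((x \<bullet> z) *\<^sub>R x) \<partial>M)"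
    unfolding Aop_def by (rule integral_norm_bound)
  also have "\<dots> \<le> \<bar>\<integral>x. norm ((x \<bullet> z) *\<^sub>R x) \<partial>M\<bar>" by simp
  also have "\<dots> \<le> norm z"
    by (rule intbound) (auto intro: order_trans[OF Cauchy_Schwarz_ineq2])
  finally show ?thesis .
qed

lemma A_inner: "(\<integral>x. (x \<bullet> y) * (x \<bullet> z) \<partial>M) = y \<bullet> Aop M z"
proof -
  have "(x \<bullet> y) * (x \<bullet> z) = y \<bullet> ((x \<bullet> z) *\<^sub>R x)" for x
    by (simp add: inner_commute)
  then have "(\<integral>x. (x \<bullet> y) * (x \<bullet> z) \<partial>M) = (\<integral>x. y \<bullet> ((x \<bullet> z) *\<^sub>R x) \<partial>M)"
    by presburger
  also have "\<dots> = y \<bullet> Aop M z" unfolding Aop_def by (rule integral_inner_right) (rule A_int)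
  finally show ?thesis .
qed

lemma T_eq: "(\<integral>z. \<integral>y. \<integral>x. gg x y z \<partial>M \<partial>M \<partial>M) = (\<integral>z. Aop M z \<bullet> Aop M z \<partial>M)"
proof -
  have "(\<integral>y. \<integral>x. gg x y z \<partial>M \<partial>M) = Aop M z \<bullet> Aop M z" for z
  proof -
    have "(\<integral>x. gg x y z \<partial>M) = (y \<bullet> Aop M z) * (y \<bullet> z)" for y
      unfolding gg_def using A_inner[of y z] by simp
    then have "(\<integral>y. \<integral>x. gg x y z \<partial>M \<partial>M) = (\<integral>y. (y \<bullet> Aop M z) * (y \<bullet> z) \<partial>M)" by simp
    also have "\<dots> = Aop M z \<bullet> Aop M z" by (rule A_inner)
    finally show ?thesis .
  qed
  then show ?thesis by simp
qed

lemma Q_eq: "(\<integral>z. \<integral>y. (y \<bullet> z)\<^sup>2 \<partial>M \<partial>M) = (\<integral>z. z \<bullet> Aop M z \<partial>M)"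
  using A_inner by (simp add: power2_eq_square)

lemma pair_int: "i \<in> Basis \<Longrightarrow> j \<in> Basis \<Longrightarrow> integrable M (\<lambda>x. (x \<bullet> i) * (x \<bullet> j))"
  by (rule intb[where C=1]) (auto simp: abs_mult intro!: mult_le_one order_trans[OF Basis_le_norm])

lemma Q_sum: "(\<integral>z. \<integral>y. (y \<bullet> z)\<^sup>2 \<partial>M \<partial>M) =
   (\<Sum>i\<in>Basis. \<Sum>j\<in>Basis. (\<integral>x. (x \<bullet> i) * (x \<bullet> j) \<partial>M)\<^sup>2)"
proof -
  have e: "(y \<bullet> z)\<^sup>2 = (\<Sum>i\<in>Basis. \<Sum>j\<in>Basis. ((y \<bullet> i) * (y \<bullet> j)) * ((z \<bullet> i) * (z \<bullet> j)))" for y z :: 'a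
    by (simp add: power2_eq_square euclidean_inner[of y z] sum_product algebra_simps)
  have "(\<integral>y. (y \<bullet> z)\<^sup>2 \<partial>M) = (\<Sum>i\<in>Basis. \<Sum>j\<in>Basis. (\<integral>x. (x \<bullet> i) * (x \<bullet> j) \<partial>M) * ((z \<bullet> i) * (z \<bullet> j)))" for z
    unfolding e using pair_int by (simp add: integral_sum)
  then have "(\<integral>z. \<integral>y. (y \<bullet> z)\<^sup>2 \<partial>M \<partial>M) = (\<integral>z. (\<Sum>i\<in>Basis. \<Sum>j\<in>Basis. (\<integral>x. (x \<bullet> i) * (x \<bullet> j) \<partial>M) * ((z \<bullet> i) * (z \<bullet> j))) \<partial>M)"
    by simp
  also have "\<dots> = (\<Sum>i\<in>Basis. \<Sum>j\<in>Basis. (\<integral>x. (x \<bullet> i) * (x \<bullet> j) \<partial>M) * (\<integral>z. (z \<bullet> i) * (z \<bullet> j) \<partial>M))"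
    using pair_int by (simp add: integral_sum)
  finally show ?thesis by (simp add: power2_eq_square)
qed

lemma trace1: "(\<Sum>i\<in>Basis. (\<integral>x. (x \<bullet> i) * (x \<bullet> i) \<partial>M)) = 1"
proof -
  interpret prob_space M by (rule P)
  have "(\<Sum>i\<in>Basis. (\<integral>x. (x \<bullet> i) * (x \<bullet> i) \<partial>M)) = (\<integral>x. (\<Sum>i\<in>Basis. (x \<bullet> i) * (x \<bullet> i)) \<partial>M)"
    using pair_int by (simp add: integral_sum)
  also have "\<dots> = (\<integral>x. x \<bullet> x \<partial>M)" by (simp add: euclidean_inner[symmetric])
  also have "\<dots> = (\<integral>x. 1 \<partial>M)"
    apply (rule integral_cong_AE)
    apply (simp add: measM)
    apply simp
    using Sph apply eventually_elim by (simp add: norm_eq_sqrt_inner)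
  also have "\<dots> = 1" by (simp add: prob_space)
  finally show ?thesis .
qed

lemma eq_level:
  fixes u v :: "'a \<Rightarrow> real"
  assumes "integrable M u" "integrable M v" "AE x in M. u x \<le> v x" "(\<integral>x. u x \<partial>M) = (\<integral>x. v x \<partial>M)"
  shows "AE x in M. u x = v x"
proof -
  have "(\<integral>x. v x - u x \<partial>M) = 0" using assms by simp
  then have "AE x in M. v x - u x = 0"
    using integral_nonneg_eq_0_iff_AE[of M "\<lambda>x. v x - u x"] assms by auto
  then show ?thesis by eventually_elim simp
qed

lemma mono3:
  fixes F G :: "'a \<Rightarrow> 'a \<Rightarrow> 'a \<Rightarrow> real"
  assumes mF: "(\<lambda>((z,y),x). F x y z) \<in> borel_measurable borel"
    and bF: "\<And>x y z. norm x = 1 \<Longrightarrow> norm y = 1 \<Longrightarrow> norm z = 1 \<Longrightarrow> \<bar>F x y z\<bar> \<le> 1"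
    and mG: "(\<lambda>((z,y),x). G x y z) \<in> borel_measurable borel"
    and bG: "\<And>x y z. norm x = 1 \<Longrightarrow> norm y = 1 \<Longrightarrow> norm z = 1 \<Longrightarrow> \<bar>G x y z\<bar> \<le> 1"
    and le: "\<And>x y z. norm x = 1 \<Longrightarrow> norm y = 1 \<Longrightarrow> norm z = 1 \<Longrightarrow> F x y z \<le> G x y z"
  shows "(\<integral>z. \<integral>y. \<integral>x. F x y z \<partial>M \<partial>M \<partial>M) \<le> (\<integral>z. \<integral>y. \<integral>x. G x y z \<partial>M \<partial>M \<partial>M)"
    and "(\<integral>z. \<integral>y. \<integral>x. F x y z \<partial>M \<partial>M \<partial>M) = (\<integral>z. \<integral>y. \<integral>x. G x y z \<partial>M \<partial>M \<partial>M) \<Longrightarrow>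
         AE z in M. AE y in M. AE x in M. F x y z = G x y z"
proof -
  have bF': "\<forall>x y z. norm x = 1 \<longrightarrow> norm y = 1 \<longrightarrow> norm z = 1 \<longrightarrow> \<bar>F x y z\<bar> \<le> 1"
    using bF by blast
  have bG': "\<forall>x y z. norm x = 1 \<longrightarrow> norm y = 1 \<longrightarrow> norm z = 1 \<longrightarrow> \<bar>G x y z\<bar> \<le> 1"
    using bG by blast
  note iF = tri_int[OF mF bF'] and iG = tri_int[OF mG bG']
  have l1: "(\<integral>x. F x y z \<partial>M) \<le> (\<integral>x. G x y z \<partial>M)" if "norm y = 1" "norm z = 1" for y z
  proof (rule integral_mono_AE[OF iF(1)[OF that] iG(1)[OF that]])
    show "AE x in M. F x y z \<le> G x y z" using Sph by eventually_elim (rule le, simp_all add: that)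
  qed
  have l2: "(\<integral>y. \<integral>x. F x y z \<partial>M \<partial>M) \<le> (\<integral>y. \<integral>x. G x y z \<partial>M \<partial>M)" if "norm z = 1" for z
  proof (rule integral_mono_AE[OF iF(3)[OF that] iG(3)[OF that]])
    show "AE y in M. (\<integral>x. F x y z \<partial>M) \<le> (\<integral>x. G x y z \<partial>M)" using Sph by eventually_elim (rule l1, simp_all add: that)
  qed
  show "(\<integral>z. \<integral>y. \<integral>x. F x y z \<partial>M \<partial>M \<partial>M) \<le> (\<integral>z. \<integral>y. \<integral>x. G x y z \<partial>M \<partial>M \<partial>M)"
  proof (rule integral_mono_AE[OF iF(5) iG(5)])
    show "AE z in M. (\<integral>y. \<integral>x. F x y z \<partial>M \<partial>M) \<le> (\<integral>y. \<integral>x. G x y z \<partial>M \<partial>M)"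
      using Sph by eventually_elim (rule l2)
  qed
  assume eq: "(\<integral>z. \<integral>y. \<integral>x. F x y z \<partial>M \<partial>M \<partial>M) = (\<integral>z. \<integral>y. \<integral>x. G x y z \<partial>M \<partial>M \<partial>M)"
  have e3: "AE z in M. (\<integral>y. \<integral>x. F x y z \<partial>M \<partial>M) = (\<integral>y. \<integral>x. G x y z \<partial>M \<partial>M)"
  proof (rule eq_level[OF iF(5) iG(5) _ eq])
    show "AE z in M. (\<integral>y. \<integral>x. F x y z \<partial>M \<partial>M) \<le> (\<integral>y. \<integral>x. G x y z \<partial>M \<partial>M)"
      using Sph by eventually_elim (rule l2)
  qed
  show "AE z in M. AE y in M. AE x in M. F x y z = G x y z"
    using e3 Sph
  proof eventually_elim
    case (elim z)
    then have z1: "norm z = 1" by simp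
    have e2: "AE y in M. (\<integral>x. F x y z \<partial>M) = (\<integral>x. G x y z \<partial>M)"
    proof (rule eq_level[OF iF(3)[OF z1] iG(3)[OF z1] _ elim(1)])
      show "AE y in M. (\<integral>x. F x y z \<partial>M) \<le> (\<integral>x. G x y z \<partial>M)"
        using Sph by eventually_elim (rule l1, simp_all add: z1)
    qed
    show ?case using e2 Sph
    proof eventually_elim
      case (elim y)
      then have y1: "norm y = 1" by simp
      show ?case
      proof (rule eq_level[OF iF(1)[OF y1 z1] iG(1)[OF y1 z1] _ elim(1)])
        show "AE x in M. F x y z \<le> G x y z" using Sph by eventually_elim (rule le, simp_all add: y1 z1)
      qed
    qed
  qed
qed

lemma main_chain:
  assumes p: "0 < p" "p < 1"
  shows "1 / real DIM('a) \<le> (\<integral>z. \<integral>y. (y \<bullet> z)\<^sup>2 \<partial>M \<partial>M)"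
    and "(\<integral>z. \<integral>y. (y \<bullet> z)\<^sup>2 \<partial>M \<partial>M)\<^sup>2 \<le> (\<integral>z. \<integral>y. \<integral>x. gg x y z \<partial>M \<partial>M \<partial>M)"
    and "(\<integral>z. \<integral>y. \<integral>x. gg x y z \<partial>M \<partial>M \<partial>M) \<le> (\<integral>z. \<integral>y. \<integral>x. \<bar>gg x y z\<bar> powr p \<partial>M \<partial>M \<partial>M)"
proof -
  show q: "1 / real DIM('a) \<le> (\<integral>z. \<integral>y. (y \<bullet> z)\<^sup>2 \<partial>M \<partial>M)"
    unfolding Q_sum using quad_alg(1)[of Basis "\<lambda>i j. \<integral>x. (x \<bullet> i) * (x \<bullet> j) \<partial>M", OF _ _ trace1] by simp
  show "(\<integral>z. \<integral>y. \<integral>x. gg x y z \<partial>M \<partial>M \<partial>M) \<le> (\<integral>z. \<integral>y. \<integral>x. \<bar>gg x y z\<bar> powr p \<partial>M \<partial>M \<partial>M)"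
    by (rule mono3(1)[OF gg_meas _ ff_meas]) (use gg_bound ff_bound gg_le_ff p in auto)
  note A_meas[measurable]
  have m1: "(\<lambda>z. z \<bullet> Aop M z) \<in> borel_measurable borel" by measurable
  have m2: "(\<lambda>z. norm (Aop M z)) \<in> borel_measurable borel" by measurable
  have m3: "(\<lambda>z. (norm (Aop M z))\<^sup>2) \<in> borel_measurable borel" by measurable
  have bA: "norm (Aop M z) \<le> 1" if "norm z = 1" for z using A_norm[of z] that by simp
  have i1: "integrable M (\<lambda>z. z \<bullet> Aop M z)"
  proof (rule intb[OF m1, where C=1])
    fix x :: 'a assume "norm x = 1"
    then show "norm (x \<bullet> Aop M x) \<le> 1" using Cauchy_Schwarz_ineq2[of x "Aop M x"] bA[of x] by simp
  qed
  have i2: "integrable M (\<lambda>z. norm (Aop M z))"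
    by (rule intb[OF m2, where C=1]) (use bA in auto)
  have i3: "integrable M (\<lambda>z. (norm (Aop M z))\<^sup>2)"
  proof (rule intb[OF m3, where C=1])
    fix x :: 'a assume "norm x = 1"
    then have "norm (Aop M x) \<le> 1" by (rule bA)
    then show "norm ((norm (Aop M x))\<^sup>2) \<le> 1" by (simp add: power_le_one)
  qed
  have Qle: "(\<integral>z. z \<bullet> Aop M z \<partial>M) \<le> (\<integral>z. norm (Aop M z) \<partial>M)"
  proof (rule integral_mono_AE[OF i1 i2])
    show "AE z in M. z \<bullet> Aop M z \<le> norm (Aop M z)"
      using Sph
    proof eventually_elim
      case (elim z)
      show ?case using norm_cauchy_schwarz[of z "Aop M z"] elim by simp
    qed
  qed
  have J: "(\<integral>z. norm (Aop M z) \<partial>M)\<^sup>2 \<le> (\<integral>z. (norm (Aop M z))\<^sup>2 \<partial>M)"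
    by (rule jensen_sq[OF i2 i3])
  have Qnn: "0 \<le> (\<integral>z. z \<bullet> Aop M z \<partial>M)" using q Q_eq by (metis of_nat_0_le_iff order_trans divide_nonneg_nonneg zero_le_one)
  have "(\<integral>z. z \<bullet> Aop M z \<partial>M)\<^sup>2 \<le> (\<integral>z. norm (Aop M z) \<partial>M)\<^sup>2"
    using Qle Qnn by (intro power_mono) auto
  also have "\<dots> \<le> (\<integral>z. Aop M z \<bullet> Aop M z \<partial>M)" using J by (simp add: power2_norm_eq_inner)
  finally show "(\<integral>z. \<integral>y. (y \<bullet> z)\<^sup>2 \<partial>M \<partial>M)\<^sup>2 \<le> (\<integral>z. \<integral>y. \<integral>x. gg x y z \<partial>M \<partial>M \<partial>M)"
    unfolding Q_eq T_eq .
qed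

lemma AE_ex:
  assumes "AE x in M. Q x" "emeasure M (ball c r) \<noteq> 0"
  shows "\<exists>x\<in>ball c r. Q x"
proof (rule ccontr)
  assume "\<not> (\<exists>x\<in>ball c r. Q x)"
  then have "AE x in M. x \<notin> ball c r" using assms(1) by (auto elim: eventually_mono)
  moreover have "ball c r \<in> sets M" by (simp add: B)
  ultimately have "emeasure M (ball c r) = 0"
    by (subst (asm) AE_iff_measurable[of "ball c r"]) (auto simp: spc)
  then show False using assms(2) by simp
qed

definition supp :: "'a set" where "supp = {x. \<forall>r>0. emeasure M (ball x r) \<noteq> 0}"

lemma supp_unit: "x \<in> supp \<Longrightarrow> norm x = 1"
proof (rule ccontr)
  assume x: "x \<in> supp" and n: "norm x \<noteq> 1"
  define r where "r = \<bar>norm x - 1\<bar>"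
  have "r > 0" using n by (simp add: r_def)
  then have "emeasure M (ball x r) \<noteq> 0" using x by (simp add: supp_def)
  then obtain y where "y \<in> ball x r" "norm y = 1" using AE_ex[OF Sph] by blast
  then have "dist x y < r" by simp
  moreover have "\<bar>norm x - norm y\<bar> \<le> dist x y" by (simp add: dist_norm norm_triangle_ineq3)
  ultimately show False using \<open>norm y = 1\<close> by (simp add: r_def)
qed

lemma supp_AE: "AE x in M. x \<in> supp"
proof -
  define F where "F = {ball x r |x r. r > 0 \<and> emeasure M (ball x r) = 0}"
  obtain F' where F': "F' \<subseteq> F" "countable F'" "\<Union>F' = \<Union>F"
    using Lindelof[of F] by (auto simp: F_def)
  have "(\<Union>i\<in>F'. i) \<in> null_sets M"
  proof (rule null_sets_UN'[OF F'(2)])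
    fix i assume "i \<in> F'"
    then have "i \<in> F" using F' by auto
    then show "i \<in> null_sets M" by (auto simp: F_def B null_sets_def)
  qed
  moreover have "{x \<in> space M. \<not> x \<in> supp} \<subseteq> (\<Union>i\<in>F'. i)"
  proof
    fix x assume "x \<in> {x \<in> space M. \<not> x \<in> supp}"
    then obtain r where "r > 0" "emeasure M (ball x r) = 0" by (auto simp: supp_def)
    then have "ball x r \<in> F" unfolding F_def by blast
    moreover have "x \<in> ball x r" using \<open>r > 0\<close> by simp
    ultimately have "x \<in> \<Union>F" by blast
    then show "x \<in> (\<Union>i\<in>F'. i)" using F' by auto
  qed
  ultimately show ?thesis by (rule AE_I')
qed

lemma supp_pair:
  assumes p: "0 < p" "p < 1"
    and H: "AE z in M. AE y in M. AE x in M. gg x y z = \<bar>gg x y z\<bar> powr p"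
    and x0: "x0 \<in> supp" and y0: "y0 \<in> supp"
  shows "(x0 \<bullet> y0)\<^sup>2 = 0 \<or> (x0 \<bullet> y0)\<^sup>2 = 1"
proof (rule ccontr)
  assume c: "\<not> ((x0 \<bullet> y0)\<^sup>2 = 0 \<or> (x0 \<bullet> y0)\<^sup>2 = 1)"
  have u: "norm x0 = 1" "norm y0 = 1" using supp_unit x0 y0 by auto
  have "(x0 \<bullet> y0)\<^sup>2 \<le> 1" using inner_unit[OF u] power_le_one[of "\<bar>x0 \<bullet> y0\<bar>" 2] by simp
  moreover have "0 \<le> (x0 \<bullet> y0)\<^sup>2" by simp
  moreover have "gg x0 y0 x0 = (x0 \<bullet> y0)\<^sup>2"
    using u by (simp add: gg_def power2_eq_square inner_commute norm_eq_sqrt_inner)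
  ultimately have g: "0 < gg x0 y0 x0" "gg x0 y0 x0 < 1" using c by auto
  obtain r where r: "r > 0" "\<And>x y z. dist x x0 < r \<Longrightarrow> dist y y0 < r \<Longrightarrow> dist z x0 < r \<Longrightarrow> 0 < gg x y z \<and> gg x y z < 1"
    using box3[OF g] by blast
  have mx: "emeasure M (ball x0 r) \<noteq> 0" and my: "emeasure M (ball y0 r) \<noteq> 0"
    using x0 y0 r(1) by (auto simp: supp_def)
  obtain z where z: "z \<in> ball x0 r" "AE y in M. AE x in M. gg x y z = \<bar>gg x y z\<bar> powr p"
    using AE_ex[OF H mx] by blast
  obtain y where y: "y \<in> ball y0 r" "AE x in M. gg x y z = \<bar>gg x y z\<bar> powr p"
    using AE_ex[OF z(2) my] by blast
  obtain x where x: "x \<in> ball x0 r" "gg x y z = \<bar>gg x y z\<bar> powr p"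
    using AE_ex[OF y(2) mx] by blast
  have "0 < gg x y z" "gg x y z < 1" using r(2)[of x y z] x(1) y(1) z(1) by (auto simp: dist_commute)
  then have "gg x y z powr 1 < gg x y z powr p" using p by (intro powr_less_mono') auto
  then show False using x(2) \<open>0 < gg x y z\<close> by simp
qed

lemma iso:
  assumes c: "\<forall>i\<in>Basis. \<forall>j\<in>Basis. (\<integral>x. (x \<bullet> i) * (x \<bullet> j) \<partial>M) = (if i = j then 1 / real DIM('a) else 0)"
  shows "(\<integral>x. (x \<bullet> u)\<^sup>2 \<partial>M) = (norm u)\<^sup>2 / real DIM('a)"
proof -
  have e: "(x \<bullet> u)\<^sup>2 = (\<Sum>i\<in>Basis. \<Sum>j\<in>Basis. ((x \<bullet> i) * (x \<bullet> j)) * ((u \<bullet> i) * (u \<bullet> j)))" for x :: 'a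
    by (simp add: power2_eq_square euclidean_inner[of x u] sum_product algebra_simps)
  have "(\<integral>x. (x \<bullet> u)\<^sup>2 \<partial>M) = (\<Sum>i\<in>Basis. \<Sum>j\<in>Basis. (\<integral>x. (x \<bullet> i) * (x \<bullet> j) \<partial>M) * ((u \<bullet> i) * (u \<bullet> j)))"
    unfolding e using pair_int by (simp add: integral_sum)
  also have "\<dots> = (\<Sum>i\<in>Basis. \<Sum>j\<in>Basis. (if i = j then 1 / real DIM('a) else 0) * ((u \<bullet> i) * (u \<bullet> j)))"
    using c by (intro sum.cong refl) auto
  also have "\<dots> = (\<Sum>i\<in>Basis. (u \<bullet> i) * (u \<bullet> i)) / real DIM('a)"
  proof -
    have r: "(if i = j then 1 / real DIM('a) else 0) * t = (if j = i then t / real DIM('a) else 0)" for i j :: 'a and t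
      by auto
    show ?thesis unfolding r by (simp add: sum_divide_distrib)
  qed
  also have "\<dots> = (norm u)\<^sup>2 / real DIM('a)"
    by (simp add: power2_norm_eq_inner euclidean_inner[of u u])
  finally show ?thesis .
qed

lemma finite_sets: "finite X \<Longrightarrow> X \<in> sets M"
  by (simp add: B finite_imp_closed borel_closed)

lemma onb_struct:
  assumes isoH: "\<And>u. (\<integral>x. (x \<bullet> u)\<^sup>2 \<partial>M) = (norm u)\<^sup>2 / real DIM('a)"
    and pairH: "\<And>x y. x \<in> supp \<Longrightarrow> y \<in> supp \<Longrightarrow> (x \<bullet> y)\<^sup>2 = 0 \<or> (x \<bullet> y)\<^sup>2 = 1"
  shows "\<exists>e :: nat \<Rightarrow> 'a.
           (\<forall>i<DIM('a). \<forall>j<DIM('a). e i \<bullet> e j = (if i = j then 1 else 0)) \<and>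
           emeasure M (\<Union>j<DIM('a). {e j, - e j}) = 1 \<and>
           (\<forall>j<DIM('a). emeasure M {e j, - e j} = ennreal (1 / real DIM('a)))"
proof -
  interpret prob_space M by (rule P)
  define rep where "rep x = (SOME y. y \<in> {x, - x})" for x :: 'a
  have rep1: "rep x = x \<or> rep x = - x" for x
    using someI[of "\<lambda>y. y \<in> {x, - x}" x] by (auto simp: rep_def)
  have rep2: "rep (- x) = rep x" for x by (simp add: rep_def insert_commute)
  define R where "R = rep ` supp"
  have Rn: "norm r = 1" if "r \<in> R" for r
    using that rep1 supp_unit by (auto simp: R_def) (metis norm_minus_cancel)
  have Ro: "r1 \<bullet> r2 = 0" if rr: "r1 \<in> R" "r2 \<in> R" "r1 \<noteq> r2" for r1 r2
  proof -
    obtain a b where ab: "a \<in> supp" "b \<in> supp" "r1 = rep a" "r2 = rep b" using rr by (auto simp: R_def)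
    have sq: "(r1 \<bullet> r2)\<^sup>2 = (a \<bullet> b)\<^sup>2" using rep1[of a] rep1[of b] ab by auto
    show ?thesis
    proof (cases "(a \<bullet> b)\<^sup>2 = 1")
      case True
      then have "b = a \<or> b = - a" using unit_sq1 supp_unit ab by blast
      then have "r2 = r1" using ab rep2 by auto
      then show ?thesis using rr by simp
    next
      case False
      then show ?thesis using pairH[OF ab(1,2)] sq by simp
    qed
  qed
  have indep: "independent R"
  proof (rule pairwise_orthogonal_independent)
    show "pairwise orthogonal R" using Ro by (auto simp: pairwise_def orthogonal_def)
    show "0 \<notin> R" using Rn by force
  qed
  then have finR: "finite R" and cardR: "card R \<le> DIM('a)" using independent_bound by auto
  have cover: "x \<in> R \<or> - x \<in> R" if "x \<in> supp" for x
  proof -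
    have "rep x \<in> R" using that by (simp add: R_def)
    then show ?thesis using rep1[of x] by auto
  qed
  have AEcov: "AE x in M. x \<in> R \<or> - x \<in> R" using supp_AE by eventually_elim (rule cover)
  have cardR': "card R = DIM('a)"
  proof (rule ccontr)
    assume "card R \<noteq> DIM('a)"
    then have "dim R < DIM('a)" using cardR dim_le_card[of R R] finR span_superset by fastforce
    then obtain u :: 'a where u: "u \<noteq> 0" "\<And>y. y \<in> span R \<Longrightarrow> orthogonal u y"
      using orthogonal_to_subspace_exists[of R] by blast
    have "(\<integral>x. (x \<bullet> u)\<^sup>2 \<partial>M) = (\<integral>x. 0 \<partial>M)"
    proof (rule integral_cong_AE)
      show "(\<lambda>x. (x \<bullet> u)\<^sup>2) \<in> borel_measurable M" by (simp add: measM)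
      show "(\<lambda>x. 0::real) \<in> borel_measurable M" by simp
      show "AE x in M. (x \<bullet> u)\<^sup>2 = 0" using AEcov
      proof eventually_elim
        case (elim x)
        then obtain r where r: "r \<in> R" "x = r \<or> x = - r" by (metis minus_minus)
        have "u \<bullet> r = 0" using u(2)[of r] span_base[OF r(1)] by (simp add: orthogonal_def)
        then show ?case using r(2) by (auto simp: inner_commute)
      qed
    qed
    then have "(norm u)\<^sup>2 / real DIM('a) = 0" using isoH by simp
    then show False using u(1) by simp
  qed
  obtain e where e: "bij_betw e {0..<DIM('a)} R" using ex_bij_betw_nat_finite[OF finR] cardR' by auto
  have eR: "e j \<in> R" if "j < DIM('a)" for j using e that by (auto simp: bij_betw_def)
  have einj: "e i \<noteq> e j" if "i < DIM('a)" "j < DIM('a)" "i \<noteq> j" for i j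
    using e that by (auto simp: bij_betw_def inj_on_def)
  have ON: "\<forall>i<DIM('a). \<forall>j<DIM('a). e i \<bullet> e j = (if i = j then 1 else 0)"
  proof (intro allI impI)
    fix i j assume ij: "i < DIM('a)" "j < DIM('a)"
    show "e i \<bullet> e j = (if i = j then 1 else 0)"
    proof (cases "i = j")
      case True
      have "e i \<bullet> e i = (norm (e i))\<^sup>2" by (simp add: power2_norm_eq_inner)
      then show ?thesis using Rn[OF eR[OF ij(1)]] True by simp
    next
      case False
      then show ?thesis using Ro[OF eR[OF ij(1)] eR[OF ij(2)] einj[OF ij False]] by simp
    qed
  qed
  have img: "e ` {..<DIM('a)} = R" using e by (simp add: bij_betw_def atLeast0LessThan)
  have U: "(\<Union>j<DIM('a). {e j, - e j}) = R \<union> uminus ` R"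
  proof -
    have "(\<Union>j<DIM('a). {e j, - e j}) = e ` {..<DIM('a)} \<union> uminus ` e ` {..<DIM('a)}" by auto
    then show ?thesis using img by simp
  qed
  have finU: "finite (\<Union>j<DIM('a). {e j, - e j})" by simp
  have AEU: "AE x in M. x \<in> (\<Union>j<DIM('a). {e j, - e j})"
    using AEcov
  proof eventually_elim
    case (elim x)
    then show ?case unfolding U by (auto simp: image_iff) (metis minus_minus)
  qed
  have ee1: "e j \<bullet> e j = 1" if "j < DIM('a)" for j using ON that by simp
  have M1: "emeasure M (\<Union>j<DIM('a). {e j, - e j}) = 1"
  proof -
    have "prob (\<Union>j<DIM('a). {e j, - e j}) = 1"
      using AE_in_set_eq_1[OF finite_sets[OF finU]] AEU by simp
    then show ?thesis by (simp add: emeasure_eq_measure)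
  qed
  have M2: "emeasure M {e j, - e j} = ennreal (1 / real DIM('a))" if j: "j < DIM('a)" for j
  proof -
    have n1: "norm (e j) = 1" using Rn[OF eR[OF j]] .
    have "(\<integral>x. (x \<bullet> e j)\<^sup>2 \<partial>M) = (\<integral>x. indicator {e j, - e j} x \<partial>M)"
    proof (rule integral_cong_AE)
      show "(\<lambda>x. (x \<bullet> e j)\<^sup>2) \<in> borel_measurable M" by (simp add: measM)
      show "(\<lambda>x. indicator {e j, - e j} x :: real) \<in> borel_measurable M"
        using finite_sets[of "{e j, - e j}"] by simp
      show "AE x in M. (x \<bullet> e j)\<^sup>2 = indicator {e j, - e j} x" using AEcov
      proof eventually_elim
        case (elim x)
        then obtain r where r: "r \<in> R" "x = r \<or> x = - r" by (metis minus_minus)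
        show ?case
        proof (cases "r = e j")
          case True
          then show ?thesis using r(2) ee1[OF j] by (auto simp: indicator_def)
        next
          case False
          then have r0: "r \<bullet> e j = 0" using Ro[OF r(1) eR[OF j]] by simp
          have "x \<notin> {e j, - e j}"
          proof
            assume "x \<in> {e j, - e j}"
            then have "r = e j \<or> r = - e j" using r(2) by auto
            then show False using False r0 ee1[OF j] by auto
          qed
          then show ?thesis using r(2) r0 by (auto simp: indicator_def)
        qed
      qed
    qed
    then have "measure M {e j, - e j} = 1 / real DIM('a)"
      using isoH[of "e j"] n1 by (simp add: spc)
    then show ?thesis by (simp add: emeasure_eq_measure)
  qed
  show ?thesis using ON M1 M2 by blast
qed

lemma converse:
  fixes e :: "nat \<Rightarrow> 'a"
  assumes p: "0 < p"
    and ON: "\<forall>i<DIM('a). \<forall>j<DIM('a). e i \<bullet> e j = (if i = j then 1 else 0)"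
    and M1: "emeasure M (\<Union>j<DIM('a). {e j, - e j}) = 1"
    and M2: "\<forall>j<DIM('a). emeasure M {e j, - e j} = ennreal (1 / real DIM('a))"
  shows "(\<integral>z. \<integral>y. \<integral>x. \<bar>gg x y z\<bar> powr p \<partial>M \<partial>M \<partial>M) = 1 / (real DIM('a))\<^sup>2"
proof -
  interpret prob_space M by (rule P)
  define n where "n = DIM('a)"
  define d where "d = real DIM('a)"
  define PU where "PU = (\<Union>j<n. {e j, - e j})"
  define I where "I j x = (indicator {e j, - e j} x :: real)" for j x
  have dpos: "d > 0" by (simp add: d_def)
  have "prob PU = 1" using M1 by (simp add: emeasure_eq_measure PU_def n_def)
  then have AEU: "AE x in M. x \<in> PU"
    using AE_in_set_eq_1[OF finite_sets[of PU]] by (simp add: PU_def)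
  have mj: "(\<integral>x. I j x \<partial>M) = 1 / d" if "j < n" for j
  proof -
    have "ennreal (measure M {e j, - e j}) = ennreal (1 / d)"
      using M2 that by (simp add: emeasure_eq_measure n_def d_def)
    then have "measure M {e j, - e j} = 1 / d" using dpos by (simp add: ennreal_inj)
    then show ?thesis by (simp add: I_def spc)
  qed
  have Im: "I j \<in> borel_measurable borel" for j
    unfolding I_def using finite_sets[of "{e j, - e j}"] by (simp add: B[symmetric] measM[symmetric])
  have Ii: "integrable M (I j)" for j
    by (rule intb[OF Im, where C=1]) (simp add: I_def indicator_def)
  have key: "\<bar>gg x y z\<bar> powr p = (\<Sum>j<n. I j x * (I j y * I j z))" if "x \<in> PU" "y \<in> PU" "z \<in> PU" for x y z
    using key_point[OF ON p, of x y z] that by (simp add: PU_def I_def n_def mult.assoc)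
  note mf = tri_meas[OF ff_meas[of p]]
  have s1: "(\<integral>x. \<bar>gg x y z\<bar> powr p \<partial>M) = (\<Sum>j<n. (1/d) * (I j y * I j z))" if "y \<in> PU" "z \<in> PU" for y z
  proof -
    have "(\<integral>x. \<bar>gg x y z\<bar> powr p \<partial>M) = (\<integral>x. (\<Sum>j<n. I j x * (I j y * I j z)) \<partial>M)"
    proof (rule integral_cong_AE)
      show "(\<lambda>x. \<bar>gg x y z\<bar> powr p) \<in> borel_measurable M" using mf(1) by (simp add: measM)
      show "(\<lambda>x. \<Sum>j<n. I j x * (I j y * I j z)) \<in> borel_measurable M" using Im by (simp add: measM)
      show "AE x in M. \<bar>gg x y z\<bar> powr p = (\<Sum>j<n. I j x * (I j y * I j z))"
        using AEU by eventually_elim (rule key, simp_all add: that)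
    qed
    also have "\<dots> = (\<Sum>j<n. (\<integral>x. I j x \<partial>M) * (I j y * I j z))"
      using Ii by (simp add: integral_sum)
    also have "\<dots> = (\<Sum>j<n. (1/d) * (I j y * I j z))" using mj by simp
    finally show ?thesis .
  qed
  have s2: "(\<integral>y. \<integral>x. \<bar>gg x y z\<bar> powr p \<partial>M \<partial>M) = (\<Sum>j<n. (1/d) * (1/d) * I j z)" if "z \<in> PU" for z
  proof -
    have "(\<integral>y. \<integral>x. \<bar>gg x y z\<bar> powr p \<partial>M \<partial>M) = (\<integral>y. (\<Sum>j<n. (1/d) * (I j y * I j z)) \<partial>M)"
    proof (rule integral_cong_AE)
      show "(\<lambda>y. \<integral>x. \<bar>gg x y z\<bar> powr p \<partial>M) \<in> borel_measurable M" using mf(2) by (simp add: measM)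
      show "(\<lambda>y. \<Sum>j<n. (1/d) * (I j y * I j z)) \<in> borel_measurable M" using Im by (simp add: measM)
      show "AE y in M. (\<integral>x. \<bar>gg x y z\<bar> powr p \<partial>M) = (\<Sum>j<n. (1/d) * (I j y * I j z))"
        using AEU by eventually_elim (rule s1, simp_all add: that)
    qed
    also have "\<dots> = (\<Sum>j<n. (1/d) * ((\<integral>y. I j y \<partial>M) * I j z))"
      using Ii by (simp add: integral_sum)
    also have "\<dots> = (\<Sum>j<n. (1/d) * (1/d) * I j z)" using mj by simp
    finally show ?thesis .
  qed
  have "(\<integral>z. \<integral>y. \<integral>x. \<bar>gg x y z\<bar> powr p \<partial>M \<partial>M \<partial>M) = (\<integral>z. (\<Sum>j<n. (1/d) * (1/d) * I j z) \<partial>M)"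
  proof (rule integral_cong_AE)
    show "(\<lambda>z. \<integral>y. \<integral>x. \<bar>gg x y z\<bar> powr p \<partial>M \<partial>M) \<in> borel_measurable M" using mf(3) by (simp add: measM)
    show "(\<lambda>z. \<Sum>j<n. (1/d) * (1/d) * I j z) \<in> borel_measurable M" using Im by (simp add: measM)
    show "AE z in M. (\<integral>y. \<integral>x. \<bar>gg x y z\<bar> powr p \<partial>M \<partial>M) = (\<Sum>j<n. (1/d) * (1/d) * I j z)"
      using AEU by eventually_elim (rule s2)
  qed
  also have "\<dots> = (\<Sum>j<n. (1/d) * (1/d) * (\<integral>z. I j z \<partial>M))"
    using Ii by (simp add: integral_sum)
  also have "\<dots> = (\<Sum>j<n. (1/d) * (1/d) * (1/d))" using mj by simp
  also have "\<dots> = 1 / d\<^sup>2" using dpos by (simp add: n_def d_def power2_eq_square)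
  finally show ?thesis by (simp add: d_def)
qed

end

theorem theorem4p4:
  fixes M :: "'a::euclidean_space measure" and p :: real
  assumes "0 < p" and "p < 1"
    and "prob_space M" and "sets M = sets borel"
    and "emeasure M (sphere 0 1) = 1"
  shows "triple_energy p M \<ge> 1 / (real DIM('a))\<^sup>2
    \<and> (triple_energy p M = 1 / (real DIM('a))\<^sup>2 \<longleftrightarrow>
        (\<exists>e :: nat \<Rightarrow> 'a.
           (\<forall>i<DIM('a). \<forall>j<DIM('a). e i \<bullet> e j = (if i = j then 1 else 0)) \<and>
           emeasure M (\<Union>j<DIM('a). {e j, - e j}) = 1 \<and>
           (\<forall>j<DIM('a). emeasure M {e j, - e j} = ennreal (1 / real DIM('a)))))"
proof -
  note p = assms(1,2) and P = assms(3) and B = assms(4)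
  interpret prob_space M by (rule P)
  have S1: "sphere (0::'a) 1 \<in> sets M" by (simp add: B)
  have S2: "prob (sphere (0::'a) 1) = 1" using assms(5) by (simp add: emeasure_eq_measure)
  have "AE x in M. x \<in> sphere (0::'a) 1" by (subst AE_in_set_eq_1[OF S1]) (rule S2)
  then have Sph: "AE x in M. norm x = 1" by (rule eventually_mono) simp
  define E where "E = (\<integral>z. \<integral>y. \<integral>x. \<bar>gg x y z\<bar> powr p \<partial>M \<partial>M \<partial>M)"
  define T where "T = (\<integral>z. \<integral>y. \<integral>x. gg x y z \<partial>M \<partial>M \<partial>M)"
  define Q where "Q = (\<integral>z. \<integral>y. (y \<bullet> z)\<^sup>2 \<partial>M \<partial>M)"
  define d where "d = real DIM('a)"
  have dpos: "d > 0" by (simp add: d_def)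
  have TE: "triple_energy p M = E" by (simp add: triple_energy_def E_def gg_def)
  note ch = main_chain[OF P B Sph p, folded E_def T_def Q_def d_def]
  have "0 \<le> 1/d" using dpos by simp
  then have Qnn: "0 \<le> Q" using ch(1) by linarith
  have "(1/d)\<^sup>2 \<le> Q\<^sup>2" using ch(1) dpos by (intro power_mono) auto
  then have low: "1 / d\<^sup>2 \<le> E" using ch(2,3) by (simp add: power_one_over)
  show ?thesis
  proof (intro conjI)
    show "1 / (real DIM('a))\<^sup>2 \<le> triple_energy p M" using low TE by (simp add: d_def)
    show "(triple_energy p M = 1 / (real DIM('a))\<^sup>2) =
      (\<exists>e :: nat \<Rightarrow> 'a.
           (\<forall>i<DIM('a). \<forall>j<DIM('a). e i \<bullet> e j = (if i = j then 1 else 0)) \<and>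
           emeasure M (\<Union>j<DIM('a). {e j, - e j}) = 1 \<and>
           (\<forall>j<DIM('a). emeasure M {e j, - e j} = ennreal (1 / real DIM('a))))"
    proof
      assume "triple_energy p M = 1 / (real DIM('a))\<^sup>2"
      then have Eeq: "E = 1 / d\<^sup>2" using TE by (simp add: d_def)
      have dd: "(1/d)\<^sup>2 = 1/d\<^sup>2" by (simp add: power_divide)
      have QE: "Q\<^sup>2 \<le> E" using ch(2) ch(3) by (rule order_trans)
      have "Q\<^sup>2 \<le> (1/d)\<^sup>2" using QE unfolding Eeq dd .
      then have "Q \<le> 1/d" by (rule power2_le_imp_le) (use dpos in simp)
      then have Qeq: "Q = 1/d" using ch(1) by linarith
      have "E = Q\<^sup>2" unfolding Eeq Qeq dd ..
      then have "E \<le> T" using ch(2) by simp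
      then have TEeq: "T = E" using ch(3) by (rule antisym[rotated])
      have QS: "Q = (\<Sum>i\<in>Basis. \<Sum>j\<in>Basis. (\<integral>x. (x \<bullet> i) * (x \<bullet> j) \<partial>M)\<^sup>2)"
        unfolding Q_def by (rule Q_sum[OF P B Sph])
      have fb: "finite (Basis::'a set)" "(Basis::'a set) \<noteq> {}" by auto
      have "(\<Sum>i\<in>Basis. \<Sum>j\<in>Basis. (\<integral>x. (x \<bullet> i) * (x \<bullet> j) \<partial>M)\<^sup>2) = 1 / real (card (Basis::'a set))"
        using Qeq QS unfolding d_def by simp
      then have c: "\<forall>i\<in>Basis. \<forall>j\<in>Basis. (\<integral>x. (x \<bullet> i) * (x \<bullet> j) \<partial>M) = (if i = j then 1 / real DIM('a) else 0)"
        by (rule quad_alg(2)[of "Basis::'a set" "\<lambda>i j. \<integral>x. (x \<bullet> i) * (x \<bullet> j) \<partial>M", OF fb trace1[OF P B Sph]])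
      have isoH: "(\<integral>x. (x \<bullet> u)\<^sup>2 \<partial>M) = (norm u)\<^sup>2 / real DIM('a)" for u
        by (rule iso[OF P B Sph c])
      have H: "AE z in M. AE y in M. AE x in M. gg x y z = \<bar>gg x y z\<bar> powr p"
      proof -
        have TEeq': "(\<integral>z. \<integral>y. \<integral>x. gg x y z \<partial>M \<partial>M \<partial>M) = (\<integral>z. \<integral>y. \<integral>x. \<bar>gg x y z\<bar> powr p \<partial>M \<partial>M \<partial>M)"
          using TEeq by (simp only: T_def E_def)
        show ?thesis
          by (rule mono3(2)[OF P B Sph gg_meas _ ff_meas _ _ TEeq']) (use gg_bound ff_bound gg_le_ff p in auto)
      qed
      have pairH: "(x \<bullet> y)\<^sup>2 = 0 \<or> (x \<bullet> y)\<^sup>2 = 1" if "x \<in> supp M" "y \<in> supp M" for x y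
        by (rule supp_pair[OF P B Sph p H that])
      show "\<exists>e :: nat \<Rightarrow> 'a.
           (\<forall>i<DIM('a). \<forall>j<DIM('a). e i \<bullet> e j = (if i = j then 1 else 0)) \<and>
           emeasure M (\<Union>j<DIM('a). {e j, - e j}) = 1 \<and>
           (\<forall>j<DIM('a). emeasure M {e j, - e j} = ennreal (1 / real DIM('a)))"
        by (rule onb_struct[OF P B Sph isoH pairH])
    next
      assume "\<exists>e :: nat \<Rightarrow> 'a.
           (\<forall>i<DIM('a). \<forall>j<DIM('a). e i \<bullet> e j = (if i = j then 1 else 0)) \<and>
           emeasure M (\<Union>j<DIM('a). {e j, - e j}) = 1 \<and>
           (\<forall>j<DIM('a). emeasure M {e j, - e j} = ennreal (1 / real DIM('a)))"
      then obtain e :: "nat \<Rightarrow> 'a" where e: "\<forall>i<DIM('a). \<forall>j<DIM('a). e i \<bullet> e j = (if i = j then 1 else 0)"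
           "emeasure M (\<Union>j<DIM('a). {e j, - e j}) = 1"
           "\<forall>j<DIM('a). emeasure M {e j, - e j} = ennreal (1 / real DIM('a))" by blast
      show "triple_energy p M = 1 / (real DIM('a))\<^sup>2"
        using converse[OF P B Sph p(1) e] TE by (simp add: E_def)
    qed
  qed
qed

end
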